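(* Let $S:=K_T(\mathrm{pt})[X_1^{(1)},Y_1^{(1)},e_1(X^{(2)}),e_2(X^{(2)}),Y_1^{(2)}]$ be a polynomial ring in five independent indeterminates over $K_T(\mathrm{pt})=\mathbb Z[T_1^{\pm1},T_2^{\pm1},T_3^{\pm1}]$, and write $e_i(T)$ for the elementary symmetric polynomials in $T_1,T_2,T_3$. Let $I_q^{\mathrm{poly}}\subset S[q_1,q_2]$ be the ideal generated by $X_1^{(1)}+Y_1^{(1)}-e_1(X^{(2)})$, $X_1^{(1)}Y_1^{(1)}-(1-q_1)e_2(X^{(2)})$, $(1-q_2)\big(e_1(X^{(2)})+Y_1^{(2)}-e_1(T)\big)$, $\big(e_1(X^{(2)})-q_2X_1^{(1)}\big)Y_1^{(2)}-(1-q_2)\big(e_2(T)-e_2(X^{(2)})\big)$, $e_2(X^{(2)})Y_1^{(2)}-(1-q_2)e_3(T)$, and let $I_q\subset S[\![q_1,q_2]\!]$ be the ideal generated by the same five elements. Then the natural ring homomorphism $\Phi^{\mathrm{poly}}:S[q_1,q_2]/I_q^{\mathrm{poly}}\to S[\![q_1,q_2]\!]/I_q$ is not injective: the class of $e_1(X^{(2)})+Y_1^{(2)}-e_1(T)$ is nonzero in $S[q_1,q_2]/I_q^{\mathrm{poly}}$ but lies in the kernel of $\Phi^{\mathrm{poly}}$. *)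

theory Defs
  imports "HOL-Library.Poly_Mapping" "HOL-Library.Product_Plus"
          "HOL-Computational_Algebra.Polynomial" "HOL-Computational_Algebra.Polynomial_FPS"
begin

text \<open>K_T(pt) = Z[T1^{+-1},T2^{+-1},T3^{+-1}]: the group ring of Z^3 over Z,
  i.e. finitely supported functions from exponent vectors in Z^3 to Z.\<close>
type_synonym KT = "(int \<times> int \<times> int) \<Rightarrow>\<^sub>0 int"

text \<open>S = K_T(pt)[X1, Y1, E1, E2, Y2] as iterated univariate polynomial rings
  (innermost variable X1, then Y1, E1 = e_1(X^(2)), E2 = e_2(X^(2)), outermost Y2).\<close>
type_synonym S = "KT poly poly poly poly poly"

text \<open>S[q1,q2] (q1 inner, q2 outer) and S[[q1,q2]] = S[[q1]][[q2]].\<close>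
type_synonym Sq = "S poly poly"
type_synonym Sqq = "S fps fps"

definition T1 :: KT where "T1 = Poly_Mapping.single (1,0,0) 1"
definition T2 :: KT where "T2 = Poly_Mapping.single (0,1,0) 1"
definition T3 :: KT where "T3 = Poly_Mapping.single (0,0,1) 1"

definition e1T :: KT where "e1T = T1 + T2 + T3"
definition e2T :: KT where "e2T = T1 * T2 + T1 * T3 + T2 * T3"
definition e3T :: KT where "e3T = T1 * T2 * T3"

definition KtoS :: "KT \<Rightarrow> S" where "KtoS c = [:[:[:[:[:c:]:]:]:]:]"
definition StoSq :: "S \<Rightarrow> Sq" where "StoSq s = [:[:s:]:]"

definition X1 :: S where "X1 = [:[:[:[:[:0, 1:]:]:]:]:]"
definition Y1 :: S where "Y1 = [:[:[:[:0, 1:]:]:]:]"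
definition E1 :: S where "E1 = [:[:[:0, 1:]:]:]"
definition E2 :: S where "E2 = [:[:0, 1:]:]"
definition Y2 :: S where "Y2 = [:0, 1:]"

definition q1 :: Sq where "q1 = [:[:0, 1:]:]"
definition q2 :: Sq where "q2 = [:0, 1:]"

definition gens :: "Sq list" where
  "gens =
    [ StoSq (X1 + Y1 - E1),
      StoSq (X1 * Y1) - (1 - q1) * StoSq E2,
      (1 - q2) * StoSq (E1 + Y2 - KtoS e1T),
      (StoSq E1 - q2 * StoSq X1) * StoSq Y2 - (1 - q2) * StoSq (KtoS e2T - E2),
      StoSq (E2 * Y2) - (1 - q2) * StoSq (KtoS e3T) ]"

definition gen_ideal :: "'a::comm_ring_1 list \<Rightarrow> 'a set" where
  "gen_ideal gs = {x. \<exists>c. x = (\<Sum>i<length gs. c i * gs ! i)}"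

definition Phi :: "Sq \<Rightarrow> Sqq" where
  "Phi p = fps_of_poly (map_poly fps_of_poly p)"

end

theory Submission
  imports Defs
begin

definition ev :: "Sq \<Rightarrow> KT" where
  "ev p = poly (poly (poly (poly (poly (poly (poly p 1) 0) 0) 0) 0) 0) 0"

lemma ev_add: "ev (a + b) = ev a + ev b" by (simp add: ev_def)
lemma ev_diff: "ev (a - b) = ev a - ev b" by (simp add: ev_def)
lemma ev_mult: "ev (a * b) = ev a * ev b" by (simp add: ev_def)
lemma ev_sum: "ev (\<Sum>i\<in>A. f i) = (\<Sum>i\<in>A. ev (f i))"
  by (simp add: ev_def poly_sum)

lemma ev_gens: "i < length gens \<Longrightarrow> ev (gens ! i) = 0"
  by (auto simp: gens_def less_Suc_eq ev_def StoSq_def KtoS_def X1_def Y1_def E1_def E2_def Y2_def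
      q1_def q2_def)

lemma e1T_nz: "e1T \<noteq> 0"
proof
  assume "e1T = 0"
  hence "Poly_Mapping.lookup e1T (1,0,0) = 0" by simp
  thus False by (simp add: e1T_def T1_def T2_def T3_def lookup_add lookup_single)
qed

lemma ev_f: "ev (StoSq (E1 + Y2 - KtoS e1T)) = - e1T"
  by (simp add: ev_def StoSq_def KtoS_def E1_def Y2_def)

lemma part1: "StoSq (E1 + Y2 - KtoS e1T) \<notin> gen_ideal gens"
proof
  assume "StoSq (E1 + Y2 - KtoS e1T) \<in> gen_ideal gens"
  then obtain c where c: "StoSq (E1 + Y2 - KtoS e1T) = (\<Sum>i<length gens. c i * gens ! i)"
    by (auto simp: gen_ideal_def)
  have "ev (StoSq (E1 + Y2 - KtoS e1T)) = 0"
    unfolding c ev_sum ev_mult by (simp add: ev_gens)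
  thus False using ev_f e1T_nz by simp
qed

definition ones :: Sqq where "ones = Abs_fps (\<lambda>n. 1)"

lemma ones_inv: "ones * (1 - fps_X) = 1"
  by (rule fps_ext) (simp add: ones_def algebra_simps fps_X_mult_nth)

lemma Phi_g2: "Phi (gens ! 2) = (1 - fps_X) * Phi (StoSq (E1 + Y2 - KtoS e1T))"
proof -
  define a where "a = E1 + Y2 - KtoS e1T"
  have h: "(1::Sq) - [:0, 1:] = [:1, -1:]" by (simp add: one_pCons)
  have g: "gens ! 2 = [:[:a:], [:-a:]:]"
    by (simp add: gens_def q2_def StoSq_def h a_def)
  have "Phi (gens ! 2) = fps_const (fps_const a) + fps_const (fps_const (-a)) * fps_X"
    unfolding g Phi_def by (simp add: map_poly_pCons fps_of_poly_pCons fps_of_poly_const)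
  also have "\<dots> = (1 - fps_X) * fps_const (fps_const a)"
    by (simp add: algebra_simps fps_const_neg)
  also have "fps_const (fps_const a) = Phi (StoSq a)"
    by (simp add: Phi_def StoSq_def map_poly_pCons fps_of_poly_const)
  finally show ?thesis unfolding a_def .
qed

lemma part2: "Phi (StoSq (E1 + Y2 - KtoS e1T)) \<in> gen_ideal (map Phi gens)"
proof -
  let ?c = "\<lambda>i::nat. if i = 2 then ones else 0"
  have "(\<Sum>i<length (map Phi gens). ?c i * map Phi gens ! i) = ones * Phi (gens ! 2)"
    by (simp add: gens_def lessThan_Suc)
  also have "\<dots> = Phi (StoSq (E1 + Y2 - KtoS e1T))"
    by (simp add: Phi_g2 mult.assoc[symmetric] ones_inv)
  finally show ?thesis unfolding gen_ideal_def by (auto intro!: exI[of _ ?c])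
qed

theorem mainTheorem11:
  shows "StoSq (E1 + Y2 - KtoS e1T) \<notin> gen_ideal gens
       \<and> Phi (StoSq (E1 + Y2 - KtoS e1T)) \<in> gen_ideal (map Phi gens)"
  using part1 part2 by blast

end
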